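(* Let $n,m$ be positive integers and $\mathbf{r}=(r_1,\dots,r_m)$, $\mathbf{s}=(s_1,\dots,s_m)$ sequences of nonnegative integers with sums $r$ and $s$. Then $|\mathrm{SB}^-(n,\mathbf{r},\mathbf{s})| = |\mathrm{SP}(n,r,s,m)|$.
   Context: Selberg permutations: let $A(n,r,s,m)$ be the set of distinct letters $x_i$ ($1\le i\le n$), $a_{ij}^{(k)}$ ($1\le i<j\le n$, $1\le k\le m$), $b_i^{(k)}$ ($1\le i\le n$, $1\le k\le r$), $c_i^{(k)}$ ($1\le i\le n$, $1\le k\le s$). $\mathrm{SP}(n,r,s,m)$ is the set of permutations (linear orderings) of $A(n,r,s,m)$ in which $x_1,\dots,x_n$ appear in this order, each $a_{ij}^{(k)}$ lies between $x_i$ and $x_j$, each $b_i^{(k)}$ lies before $x_i$, and each $c_i^{(k)}$ lies after $x_i$. Books: for nonnegative integers $p,q$, the $(n,p,q)^-$-staircase is the set of cells $(i,j)$ (row $i$, column $j$) with $1\le i\le p+n$, $1\le j\le n+q$, $i\le j+p$, excluding those with $i\le p$ and $j>n$; the cell $(j+p,j)$ ($1\le j\le n$) is its $j$th diagonal cell (so row $i>p$ contains the diagonal cell $(i,i-p)$, column $j\le n$ contains $(j+p,j)$, and other rows/columns contain none). Let page $i$ be the $(n,r_i,s_i)^-$-staircase, $1\le i\le m$, and identify the $j$th diagonal cells of all pages for each $j$. An $(n,\mathbf{r},\mathbf{s})^-$-Selberg book is a filling of the resulting cells with $1,\dots,(r+s+1)n+m\binom n2$, each used once, such that in each page every non-diagonal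 cell has entry larger than that of the diagonal cell in its row (if any) and smaller than that of the diagonal cell in its column (if any). $\mathrm{SB}^-(n,\mathbf{r},\mathbf{s})$ is the set of these. *)

theory Defs
  imports Main "HOL-Library.FuncSet"
begin

text \<open>Letters of the alphabet A(n,r,s,m):
  X i = x_i,  A i j k = a_{ij}^{(k)},  B i k = b_i^{(k)},  C i k = c_i^{(k)}.\<close>
datatype letter = X nat | A nat nat nat | B nat nat | C nat nat

definition alphabet :: "nat \<Rightarrow> nat \<Rightarrow> nat \<Rightarrow> nat \<Rightarrow> letter set" where
  "alphabet n r s m =
     {X i | i. 1 \<le> i \<and> i \<le> n}
   \<union> {A i j k | i j k. 1 \<le> i \<and> i < j \<and> j \<le> n \<and> 1 \<le> k \<and> k \<le> m}
   \<union> {B i k | i k. 1 \<le> i \<and> i \<le> n \<and> 1 \<le> k \<and> k \<le> r}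
   \<union> {C i k | i k. 1 \<le> i \<and> i \<le> n \<and> 1 \<le> k \<and> k \<le> s}"

definition precedes :: "'a list \<Rightarrow> 'a \<Rightarrow> 'a \<Rightarrow> bool" where
  "precedes w a b \<longleftrightarrow> (\<exists>p q. p < q \<and> q < length w \<and> w ! p = a \<and> w ! q = b)"

definition SP :: "nat \<Rightarrow> nat \<Rightarrow> nat \<Rightarrow> nat \<Rightarrow> letter list set" where
  "SP n r s m = {w. distinct w \<and> set w = alphabet n r s m \<and>
     (\<forall>i j. 1 \<le> i \<and> i < j \<and> j \<le> n \<longrightarrow> precedes w (X i) (X j)) \<and>
     (\<forall>i j k. 1 \<le> i \<and> i < j \<and> j \<le> n \<and> 1 \<le> k \<and> k \<le> m \<longrightarrow>
        precedes w (X i) (A i j k) \<and> precedes w (A i j k) (X j)) \<and>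
     (\<forall>i k. 1 \<le> i \<and> i \<le> n \<and> 1 \<le> k \<and> k \<le> r \<longrightarrow> precedes w (B i k) (X i)) \<and>
     (\<forall>i k. 1 \<le> i \<and> i \<le> n \<and> 1 \<le> k \<and> k \<le> s \<longrightarrow> precedes w (X i) (C i k))}"

text \<open>The (n,p,q)^- staircase: cells (row i, column j).\<close>
definition staircase :: "nat \<Rightarrow> nat \<Rightarrow> nat \<Rightarrow> (nat \<times> nat) set" where
  "staircase n p q = {(i, j). 1 \<le> i \<and> i \<le> p + n \<and> 1 \<le> j \<and> j \<le> n + q \<and> i \<le> j + p
                             \<and> \<not> (i \<le> p \<and> n < j)}"

definition is_diag :: "nat \<Rightarrow> nat \<Rightarrow> nat \<Rightarrow> nat \<Rightarrow> bool" where
  "is_diag n p i j \<longleftrightarrow> 1 \<le> j \<and> j \<le> n \<and> i = j + p"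

text \<open>Cells of the book: Diag j is the (shared) j-th diagonal cell; Cell k i j is the
  non-diagonal cell (i,j) of page k.  Pages are indexed k = 0..m-1 here, page k
  being the (n, rs!k, ss!k)^- staircase (i.e. page k+1 of the paper).\<close>
datatype cell = Diag nat | Cell nat nat nat

definition book_cells :: "nat \<Rightarrow> nat list \<Rightarrow> nat list \<Rightarrow> cell set" where
  "book_cells n rs ss =
     {Diag j | j. 1 \<le> j \<and> j \<le> n}
   \<union> {Cell k i j | k i j. k < length rs \<and> (i, j) \<in> staircase n (rs ! k) (ss ! k)
                         \<and> \<not> is_diag n (rs ! k) i j}"

definition SB_minus :: "nat \<Rightarrow> nat list \<Rightarrow> nat list \<Rightarrow> (cell \<Rightarrow> nat) set" where
  "SB_minus n rs ss =
     {f. f \<in> extensional (book_cells n rs ss) \<and>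
         bij_betw f (book_cells n rs ss)
           {1 .. (sum_list rs + sum_list ss + 1) * n + length rs * (n choose 2)} \<and>
         (\<forall>k i j. k < length rs \<and> (i, j) \<in> staircase n (rs ! k) (ss ! k)
                  \<and> \<not> is_diag n (rs ! k) i j \<longrightarrow>
            (rs ! k < i \<longrightarrow> f (Diag (i - rs ! k)) < f (Cell k i j)) \<and>
            (j \<le> n \<longrightarrow> f (Cell k i j) < f (Diag j)))}"

end

theory Submission
  imports Defs
begin


lemma precedes_trans:
  assumes "distinct w" "precedes w a b" "precedes w b c"
  shows "precedes w a c"
proof -
  obtain p q where pq: "p < q" "q < length w" "w ! p = a" "w ! q = b"
    using assms(2) unfolding precedes_def by blast
  obtain p' q' where pq': "p' < q'" "q' < length w" "w ! p' = b" "w ! q' = c"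
    using assms(3) unfolding precedes_def by blast
  have "q = p'" using pq pq' assms(1) nth_eq_iff_index_eq by (metis order.strict_trans)
  then show ?thesis unfolding precedes_def using pq pq'
    by (intro exI[of _ p] exI[of _ q']) auto
qed

lemma card_linext_list:
  assumes fin: "finite L" and cardL: "card L = N" and RL: "R \<subseteq> L \<times> L"
  shows "card {g. g \<in> extensional L \<and> bij_betw g L {1..N} \<and> (\<forall>(a,b)\<in>R. g a < g b)}
       = card {w. distinct w \<and> set w = L \<and> (\<forall>(a,b)\<in>R. precedes w a b)}"
proof (rule bij_betw_same_card)
  define F where "F g = map (inv_into L g) [1..<Suc N]" for g :: "'a \<Rightarrow> nat"
  define G where "G w = restrict (\<lambda>a. inv_into {..<length w} ((!) w) a + 1) L" for w
  let ?Fs = "{g. g \<in> extensional L \<and> bij_betw g L {1..N} \<and> (\<forall>(a,b)\<in>R. g a < g b)}"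
  let ?Ws = "{w. distinct w \<and> set w = L \<and> (\<forall>(a,b)\<in>R. precedes w a b)}"
  have Fnth: "F g ! p = inv_into L g (p+1)" if "p < N" for g p
    using that unfolding F_def by (simp del: upt_Suc)
  have FL: "length (F g) = N" for g unfolding F_def by simp
  have Gw: "G w a = inv_into {..<length w} ((!) w) a + 1" if "a \<in> L" for w a
    using that unfolding G_def by simp
  have Fga: "F g ! (g a - 1) = a" if bg: "bij_betw g L {1..N}" and aL: "a \<in> L" for g a
  proof -
    have ga: "g a \<in> {1..N}" using bg aL bij_betwE by blast
    then have lt: "g a - 1 < N" and eq: "g a - 1 + 1 = g a" by auto
    have "F g ! (g a - 1) = inv_into L g (g a)" using Fnth[OF lt] unfolding eq .
    then show ?thesis using bg aL by (simp add: bij_betw_def inv_into_f_f)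
  qed
  have F_in: "F g \<in> ?Ws" if g: "g \<in> ?Fs" for g
  proof -
    have bg: "bij_betw g L {1..N}" using g by simp
    have bi: "bij_betw (inv_into L g) {1..N} L" using bij_betw_inv_into[OF bg] .
    have d: "distinct (F g)" unfolding F_def
      using bi by (simp del: upt_Suc add: distinct_map bij_betw_def atLeastLessThanSuc_atLeastAtMost)
    have s: "set (F g) = L" unfolding F_def
      using bi by (simp del: upt_Suc add: bij_betw_def atLeastLessThanSuc_atLeastAtMost)
    have pr: "precedes (F g) a b" if ab: "(a,b) \<in> R" for a b
    proof -
      have aL: "a \<in> L" and bL: "b \<in> L" using ab RL by auto
      have ga: "g a \<in> {1..N}" and gb: "g b \<in> {1..N}" using aL bL bg bij_betwE by blast+
      have lt: "g a < g b" using g ab by auto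
      have "F g ! (g a - 1) = a" using Fga[OF bg aL] .
      moreover have "F g ! (g b - 1) = b" using Fga[OF bg bL] .
      ultimately show ?thesis unfolding precedes_def using ga gb lt FL
        by (intro exI[of _ "g a - 1"] exI[of _ "g b - 1"]) auto
    qed
    show ?thesis using d s pr by auto
  qed
  have G_in: "G w \<in> ?Fs" and FG: "F (G w) = w" if w: "w \<in> ?Ws" for w
  proof -
    have dw: "distinct w" and sw: "set w = L" using w by auto
    have lw: "length w = N" using distinct_card[OF dw] sw cardL by simp
    have bn: "bij_betw ((!) w) {..<N} L" using bij_betw_nth[OF dw] lw sw by simp
    have bi: "bij_betw (inv_into {..<N} ((!) w)) L {..<N}" using bij_betw_inv_into[OF bn] .
    have bs: "bij_betw (\<lambda>p. p + 1) {..<N} {1..N}"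
      by (rule bij_betw_byWitness[where f'="\<lambda>p. p - 1"]) auto
    have bG: "bij_betw (G w) L {1..N}"
    proof -
      have "bij_betw ((\<lambda>p. p + 1) \<circ> inv_into {..<N} ((!) w)) L {1..N}"
        using bij_betw_trans[OF bi bs] .
      then show ?thesis
        by (rule bij_betw_cong[THEN iffD1, rotated]) (simp add: Gw lw)
    qed
    have Gnth: "G w (w ! p) = p + 1" if "p < N" for p
    proof -
      have "w ! p \<in> L" using that lw sw by auto
      then show ?thesis using that lw bn
        by (simp add: Gw bij_betw_def inv_into_f_f)
    qed
    have ord: "G w a < G w b" if ab: "(a,b) \<in> R" for a b
    proof -
      have "precedes w a b" using w ab by blast
      then obtain p q where pq: "p < q" "q < length w" "w ! p = a" "w ! q = b"
        unfolding precedes_def by blast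
      show ?thesis using Gnth[of p] Gnth[of q] pq lw by auto
    qed
    have "G w \<in> extensional L" unfolding G_def by simp
    then show "G w \<in> ?Fs" using bG ord by blast
    show "F (G w) = w"
    proof (rule nth_equalityI)
      show "length (F (G w)) = length w" using FL lw by simp
      fix p assume "p < length (F (G w))"
      then have p: "p < N" using FL by simp
      have "w ! p \<in> L" using p lw sw by auto
      then have "inv_into L (G w) (p+1) = w ! p"
        using Gnth[OF p] bG by (simp add: bij_betw_def inv_into_f_eq)
      then show "F (G w) ! p = w ! p" using Fnth[OF p] by simp
    qed
  qed
  have GF: "G (F g) = g" if g: "g \<in> ?Fs" for g
  proof
    fix a
    show "G (F g) a = g a"
    proof (cases "a \<in> L")
      case False
      then show ?thesis using g unfolding G_def by (simp add: extensional_def)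
    next
      case True
      have bg: "bij_betw g L {1..N}" using g by simp
      have ga: "g a \<in> {1..N}" using True bg bij_betwE by blast
      have e: "F g ! (g a - 1) = a" using Fga[OF bg True] .
      have dF: "distinct (F g)" using F_in[OF g] by simp
      have inj: "inj_on ((!) (F g)) {..<length (F g)}"
        using dF by (simp add: inj_on_nth)
      have lt: "g a - 1 < N" using ga by auto
      have "inv_into {..<length (F g)} ((!) (F g)) a = g a - 1"
        using inv_into_f_eq[OF inj, of "g a - 1" a] e lt FL by simp
      then show ?thesis using True ga by (simp add: G_def)
    qed
  qed
  show "bij_betw F ?Fs ?Ws"
  proof (rule bij_betw_byWitness[where f'=G])
    show "\<forall>a\<in>?Fs. G (F a) = a" by (rule ballI) (rule GF)
    show "\<forall>a\<in>?Ws. F (G a) = a" by (rule ballI) (rule FG)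
    show "F ` ?Fs \<subseteq> ?Ws" by (rule image_subsetI) (rule F_in)
    show "G ` ?Ws \<subseteq> ?Fs" by (rule image_subsetI) (rule G_in)
  qed
qed



lemma card_linext_transport:
  assumes phi: "bij_betw \<phi> P L" and RP: "RP \<subseteq> P \<times> P"
    and RL: "RL = (\<lambda>(a,b). (\<phi> a, \<phi> b)) ` RP"
  shows "card {f. f \<in> extensional P \<and> bij_betw f P T \<and> (\<forall>(a,b)\<in>RP. f a < f b)}
       = card {g. g \<in> extensional L \<and> bij_betw g L T \<and> (\<forall>(a,b)\<in>RL. g a < g b)}"
proof (rule bij_betw_same_card)
  define \<psi> where "\<psi> = inv_into P \<phi>"
  have psi: "bij_betw \<psi> L P" unfolding \<psi>_def using bij_betw_inv_into[OF phi] .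
  have pp: "\<psi> (\<phi> a) = a" if "a \<in> P" for a
    using that phi unfolding \<psi>_def by (simp add: bij_betw_def inv_into_f_f)
  have pp2: "\<phi> (\<psi> x) = x" if "x \<in> L" for x
    using that phi unfolding \<psi>_def by (simp add: bij_betw_def f_inv_into_f)
  let ?Fs = "{f. f \<in> extensional P \<and> bij_betw f P T \<and> (\<forall>(a,b)\<in>RP. f a < f b)}"
  let ?Gs = "{g. g \<in> extensional L \<and> bij_betw g L T \<and> (\<forall>(a,b)\<in>RL. g a < g b)}"
  define F where "F f = restrict (f \<circ> \<psi>) L" for f :: "_ \<Rightarrow> 'c"
  define G where "G g = restrict (g \<circ> \<phi>) P" for g :: "_ \<Rightarrow> 'c"
  show "bij_betw F ?Fs ?Gs"
  proof (rule bij_betw_byWitness[where f'=G])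
    show "\<forall>f\<in>?Fs. G (F f) = f"
    proof
      fix f assume f: "f \<in> ?Fs"
      show "G (F f) = f"
      proof
        fix a show "G (F f) a = f a"
          using f pp phi bij_betwE[OF phi] unfolding F_def G_def
          by (cases "a \<in> P") (auto simp: extensional_def)
      qed
    qed
    show "\<forall>g\<in>?Gs. F (G g) = g"
    proof
      fix g assume g: "g \<in> ?Gs"
      show "F (G g) = g"
      proof
        fix a show "F (G g) a = g a"
          using g pp2 bij_betwE[OF psi] unfolding F_def G_def
          by (cases "a \<in> L") (auto simp: extensional_def)
      qed
    qed
    show "F ` ?Fs \<subseteq> ?Gs"
    proof
      fix h assume "h \<in> F ` ?Fs"
      then obtain f where f: "f \<in> ?Fs" and h: "h = F f" by blast
      have "bij_betw (f \<circ> \<psi>) L T" using bij_betw_trans[OF psi] f by blast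
      then have b: "bij_betw h L T" unfolding h F_def
        by (rule bij_betw_cong[THEN iffD1, rotated]) simp
      have o: "h x < h y" if xy: "(x,y) \<in> RL" for x y
      proof -
        obtain a b where ab: "(a,b) \<in> RP" "x = \<phi> a" "y = \<phi> b" using xy RL by auto
        have "a \<in> P" "b \<in> P" using ab RP by auto
        then show ?thesis using ab f pp bij_betwE[OF phi] unfolding h F_def by auto
      qed
      have "h \<in> extensional L" unfolding h F_def by simp
      then show "h \<in> ?Gs" using b o by auto
    qed
    show "G ` ?Gs \<subseteq> ?Fs"
    proof
      fix h assume "h \<in> G ` ?Gs"
      then obtain g where g: "g \<in> ?Gs" and h: "h = G g" by blast
      have "bij_betw (g \<circ> \<phi>) P T" using bij_betw_trans[OF phi] g by blast
      then have b: "bij_betw h P T" unfolding h G_def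
        by (rule bij_betw_cong[THEN iffD1, rotated]) simp
      have o: "h a < h b" if ab: "(a,b) \<in> RP" for a b
      proof -
        have "a \<in> P" "b \<in> P" using ab RP by auto
        moreover have "(\<phi> a, \<phi> b) \<in> RL" using ab RL by auto
        ultimately show ?thesis using g unfolding h G_def by auto
      qed
      have "h \<in> extensional P" unfolding h G_def by simp
      then show "h \<in> ?Fs" using b o by auto
    qed
  qed
qed



definition off :: "nat \<Rightarrow> nat list \<Rightarrow> nat" where
  "off k xs = sum_list (take k xs)"

lemma off_Suc: "k < length xs \<Longrightarrow> off (Suc k) xs = off k xs + xs ! k"
  unfolding off_def by (simp add: take_Suc_conv_app_nth)

lemma off_mono: "k \<le> k' \<Longrightarrow> off k xs \<le> off k' xs"
proof -
  assume "k \<le> k'"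
  then have "take k' xs = take k xs @ take (k' - k) (drop k xs)"
    by (metis le_add_diff_inverse take_add)
  then show ?thesis unfolding off_def by simp
qed

lemma off_le: "k < length xs \<Longrightarrow> off k xs + xs ! k \<le> sum_list xs"
proof -
  assume k: "k < length xs"
  have "off (Suc k) xs \<le> off (length xs) xs" using k by (intro off_mono) simp
  then show ?thesis using off_Suc[OF k] by (simp add: off_def)
qed

lemma off_inj:
  assumes "k < length xs" "k' < length xs" "1 \<le> i" "i \<le> xs ! k" "1 \<le> i'" "i' \<le> xs ! k'"
    and "off k xs + i = off k' xs + i'"
  shows "k = k' \<and> i = i'"
proof -
  have *: False if "a < b" "a < length xs" "b < length xs" "1 \<le> c" "c \<le> xs ! a" "1 \<le> d"
      "off a xs + c = off b xs + d" for a b c d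
  proof -
    have "off a xs + c \<le> off (Suc a) xs" using off_Suc[of a xs] that by simp
    also have "\<dots> \<le> off b xs" using that by (intro off_mono) simp
    finally show False using that by simp
  qed
  have "k = k'"
  proof (rule ccontr)
    assume "k \<noteq> k'"
    then consider "k < k'" | "k' < k" by linarith
    then show False
      using *[of k k' i i'] *[of k' k i' i] assms by (cases; metis)
  qed
  then show ?thesis using assms by simp
qed

lemma off_decomp:
  "1 \<le> g \<Longrightarrow> g \<le> sum_list xs \<Longrightarrow> \<exists>k i. k < length xs \<and> 1 \<le> i \<and> i \<le> xs ! k \<and> g = off k xs + i"
proof (induction xs arbitrary: g)
  case Nil
  then show ?case by simp
next
  case (Cons x xs)
  show ?case
  proof (cases "g \<le> x")
    case True
    then show ?thesis using Cons.prems
      by (intro exI[of _ 0] exI[of _ g]) (simp add: off_def)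
  next
    case False
    have "\<exists>k i. k < length xs \<and> 1 \<le> i \<and> i \<le> xs ! k \<and> g - x = off k xs + i"
      using Cons.prems False by (intro Cons.IH) auto
    then obtain k i where "k < length xs" "1 \<le> i" "i \<le> xs ! k" "g - x = off k xs + i"
      by blast
    then show ?thesis using False
      by (intro exI[of _ "Suc k"] exI[of _ i]) (simp add: off_def)
  qed
qed

lemma mem_alph_X: "X i \<in> alphabet n r s m \<longleftrightarrow> 1 \<le> i \<and> i \<le> n"
  by (auto simp: alphabet_def)
lemma mem_alph_A: "A i j k \<in> alphabet n r s m \<longleftrightarrow> 1 \<le> i \<and> i < j \<and> j \<le> n \<and> 1 \<le> k \<and> k \<le> m"
  by (auto simp: alphabet_def)
lemma mem_alph_B: "B i k \<in> alphabet n r s m \<longleftrightarrow> 1 \<le> i \<and> i \<le> n \<and> 1 \<le> k \<and> k \<le> r"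
  by (auto simp: alphabet_def)
lemma mem_alph_C: "C i k \<in> alphabet n r s m \<longleftrightarrow> 1 \<le> i \<and> i \<le> n \<and> 1 \<le> k \<and> k \<le> s"
  by (auto simp: alphabet_def)

lemma mem_Diag: "Diag j \<in> book_cells n rs ss \<longleftrightarrow> 1 \<le> j \<and> j \<le> n"
  by (auto simp: book_cells_def)
lemma mem_Cell: "Cell k i j \<in> book_cells n rs ss \<longleftrightarrow>
   k < length rs \<and> 1 \<le> i \<and> i \<le> rs ! k + n \<and> 1 \<le> j \<and> j \<le> n + ss ! k \<and> i \<le> j + rs ! k
   \<and> \<not> (i \<le> rs ! k \<and> n < j) \<and> \<not> (1 \<le> j \<and> j \<le> n \<and> i = j + rs ! k)"
  by (auto simp: book_cells_def staircase_def is_diag_def)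

definition Pairs :: "nat \<Rightarrow> (nat \<times> nat) set" where
  "Pairs n = {(i, j). 1 \<le> i \<and> i < j \<and> j \<le> n}"

lemma card_Pairs: "card (Pairs n) = n choose 2" and finite_Pairs: "finite (Pairs n)"
proof -
  have fin: "finite (Pairs n)" for n
    by (rule finite_subset[of _ "{1..n} \<times> {1..n}"]) (auto simp: Pairs_def)
  show "finite (Pairs n)" by (rule fin)
  show "card (Pairs n) = n choose 2"
  proof (induction n)
    case 0
    have "Pairs 0 = {}" by (auto simp: Pairs_def)
    then show ?case by simp
  next
    case (Suc n)
    have eq: "Pairs (Suc n) = Pairs n \<union> (\<lambda>i. (i, Suc n)) ` {1..n}"
      by (auto simp: Pairs_def)
    have "card (Pairs (Suc n)) = card (Pairs n) + card ((\<lambda>i. (i, Suc n)) ` {1..n})"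
      unfolding eq by (rule card_Un_disjoint) (simp_all add: fin, auto simp: Pairs_def)
    also have "card ((\<lambda>i. (i, Suc n)) ` {1..n}) = n"
      by (subst card_image) (auto simp: inj_on_def)
    finally show ?case using Suc.IH
      by (simp add: numeral_2_eq_2)
  qed
qed

lemma card_alphabet:
  "card (alphabet n r s m) = (r + s + 1) * n + m * (n choose 2)"
  and finite_alphabet: "finite (alphabet n r s m)"
proof -
  have e1: "{X i | i. 1 \<le> i \<and> i \<le> n} = X ` {1..n}" by auto
  have e2: "{A i j k | i j k. 1 \<le> i \<and> i < j \<and> j \<le> n \<and> 1 \<le> k \<and> k \<le> m}
      = (\<lambda>((i,j),k). A i j k) ` (Pairs n \<times> {1..m})"
    apply (auto simp: Pairs_def)
    subgoal for i j k by (rule image_eqI[where x="((i,j),k)"]) auto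
    done
  have e3: "{B i k | i k. 1 \<le> i \<and> i \<le> n \<and> 1 \<le> k \<and> k \<le> r} = (\<lambda>(i,k). B i k) ` ({1..n} \<times> {1..r})"
    by auto
  have e4: "{C i k | i k. 1 \<le> i \<and> i \<le> n \<and> 1 \<le> k \<and> k \<le> s} = (\<lambda>(i,k). C i k) ` ({1..n} \<times> {1..s})"
    by auto
  let ?S1 = "X ` {1..n}"
  let ?S2 = "(\<lambda>((i,j),k). A i j k) ` (Pairs n \<times> {1..m})"
  let ?S3 = "(\<lambda>(i,k). B i k) ` ({1..n} \<times> {1..r})"
  let ?S4 = "(\<lambda>(i,k). C i k) ` ({1..n} \<times> {1..s})"
  have al: "alphabet n r s m = ?S1 \<union> ?S2 \<union> ?S3 \<union> ?S4"
    unfolding alphabet_def e1 e2 e3 e4 ..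
  have c1: "card ?S1 = n" by (subst card_image) (auto simp: inj_on_def)
  have c2: "card ?S2 = (n choose 2) * m"
    by (subst card_image) (auto simp: inj_on_def card_cartesian_product card_Pairs)
  have c3: "card ?S3 = n * r"
    by (subst card_image) (auto simp: inj_on_def card_cartesian_product)
  have c4: "card ?S4 = n * s"
    by (subst card_image) (auto simp: inj_on_def card_cartesian_product)
  have f2: "finite ?S2" using finite_Pairs by simp
  show "finite (alphabet n r s m)" unfolding al using f2 by simp
  have "card (?S1 \<union> ?S2 \<union> ?S3 \<union> ?S4) = card ?S1 + card ?S2 + card ?S3 + card ?S4"
    using f2 by (subst card_Un_disjoint; (auto)?)+
  then show "card (alphabet n r s m) = (r + s + 1) * n + m * (n choose 2)"
    unfolding al c1 c2 c3 c4 by (simp add: algebra_simps)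
qed



definition phi :: "nat \<Rightarrow> nat list \<Rightarrow> nat list \<Rightarrow> cell \<Rightarrow> letter" where
  "phi n rs ss c = (case c of Diag j \<Rightarrow> X j
     | Cell k i j \<Rightarrow> if i \<le> rs ! k then B j (off k rs + i)
                    else if j \<le> n then A (i - rs ! k) j (Suc k)
                    else C (i - rs ! k) (off k ss + (j - n)))"

lemma phi_in:
  assumes len: "length ss = length rs" and c: "c \<in> book_cells n rs ss"
  shows "phi n rs ss c \<in> alphabet n (sum_list rs) (sum_list ss) (length rs)"
proof (cases c)
  case (Diag j)
  then show ?thesis using c by (simp add: phi_def mem_Diag mem_alph_X)
next
  case (Cell k i j)
  note cc = c[unfolded Cell mem_Cell]
  show ?thesis
  proof (cases "i \<le> rs ! k")
    case True
    have "off k rs + rs ! k \<le> sum_list rs" using cc by (intro off_le) simp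
    then show ?thesis using True cc by (auto simp: Cell phi_def mem_alph_B)
  next
    case False
    show ?thesis
    proof (cases "j \<le> n")
      case True
      then show ?thesis using False cc by (auto simp: Cell phi_def mem_alph_A)
    next
      case False2: False
      have "off k ss + ss ! k \<le> sum_list ss" using cc len by (intro off_le) simp
      then show ?thesis using False False2 cc by (auto simp: Cell phi_def mem_alph_C)
    qed
  qed
qed

lemma phi_surj:
  assumes len: "length ss = length rs"
    and l: "l \<in> alphabet n (sum_list rs) (sum_list ss) (length rs)"
  shows "l \<in> phi n rs ss ` book_cells n rs ss"
proof (cases l)
  case (X i)
  then show ?thesis using l
    by (intro image_eqI[where x="Diag i"]) (auto simp: phi_def mem_Diag mem_alph_X)
next
  case (A i j k)
  then show ?thesis using l
    by (intro image_eqI[where x="Cell (k - 1) (i + rs ! (k - 1)) j"])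
       (auto simp: phi_def mem_Cell mem_alph_A)
next
  case (B i k)
  have "1 \<le> k" "k \<le> sum_list rs" using l B by (auto simp: mem_alph_B)
  then obtain kk ii where d: "kk < length rs" "1 \<le> ii" "ii \<le> rs ! kk" "k = off kk rs + ii"
    using off_decomp by blast
  show ?thesis using l B d
    by (intro image_eqI[where x="Cell kk ii i"]) (auto simp: phi_def mem_Cell mem_alph_B)
next
  case (C i k)
  have "1 \<le> k" "k \<le> sum_list ss" using l C by (auto simp: mem_alph_C)
  then obtain kk jj where d: "kk < length ss" "1 \<le> jj" "jj \<le> ss ! kk" "k = off kk ss + jj"
    using off_decomp by blast
  show ?thesis using l C d len
    by (intro image_eqI[where x="Cell kk (i + rs ! kk) (n + jj)"])
       (auto simp: phi_def mem_Cell mem_alph_C)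
qed

lemma phi_inj:
  assumes len: "length ss = length rs"
  shows "inj_on (phi n rs ss) (book_cells n rs ss)"
proof (rule inj_onI)
  fix c d assume c: "c \<in> book_cells n rs ss" and d: "d \<in> book_cells n rs ss"
    and eq: "phi n rs ss c = phi n rs ss d"
  show "c = d"
  proof (cases c)
    case (Diag j)
    then show ?thesis using eq by (cases d) (auto simp: phi_def split: if_splits)
  next
    case (Cell k i j)
    note cc = c[unfolded Cell mem_Cell]
    note cE = Cell
    show ?thesis
    proof (cases d)
      case (Diag j')
      then show ?thesis using eq cE by (auto simp: phi_def split: if_splits)
    next
      case (Cell k' i' j')
      note Cell' = Cell
      note dd = d[unfolded Cell' mem_Cell]
      consider "i \<le> rs ! k" | "\<not> i \<le> rs ! k" "j \<le> n" | "\<not> i \<le> rs ! k" "\<not> j \<le> n" by blast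
      then show ?thesis
      proof cases
        case 1
        then have e: "i' \<le> rs ! k'" "B j (off k rs + i) = B j' (off k' rs + i')"
          using eq by (auto simp: cE Cell' phi_def split: if_splits)
        then have "k = k' \<and> i = i'"
          using off_inj[of k rs k' i i'] cc dd 1 by auto
        then show ?thesis using e cE Cell' by simp
      next
        case 2
        then have e: "\<not> i' \<le> rs ! k'" "j' \<le> n" "A (i - rs ! k) j (Suc k) = A (i' - rs ! k') j' (Suc k')"
          using eq by (auto simp: cE Cell' phi_def split: if_splits)
        then show ?thesis using 2 cE Cell' by auto
      next
        case 3
        then have e: "\<not> i' \<le> rs ! k'" "\<not> j' \<le> n"
          "C (i - rs ! k) (off k ss + (j - n)) = C (i' - rs ! k') (off k' ss + (j' - n))"
          using eq by (auto simp: cE Cell' phi_def split: if_splits)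
        then have "k = k' \<and> j - n = j' - n"
          using off_inj[of k ss k' "j - n" "j' - n"] cc dd 3 len by auto
        then show ?thesis using e 3 cE Cell' by auto
      qed
    qed
  qed
qed

lemma phi_bij:
  assumes len: "length ss = length rs"
  shows "bij_betw (phi n rs ss) (book_cells n rs ss) (alphabet n (sum_list rs) (sum_list ss) (length rs))"
  unfolding bij_betw_def using phi_inj[OF len] phi_in[OF len] phi_surj[OF len] by blast



definition RP :: "nat \<Rightarrow> nat list \<Rightarrow> nat list \<Rightarrow> (cell \<times> cell) set" where
  "RP n rs ss =
     {(Diag (i - rs ! k), Cell k i j) | k i j. k < length rs \<and> (i, j) \<in> staircase n (rs ! k) (ss ! k)
        \<and> \<not> is_diag n (rs ! k) i j \<and> rs ! k < i}
   \<union> {(Cell k i j, Diag j) | k i j. k < length rs \<and> (i, j) \<in> staircase n (rs ! k) (ss ! k)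
        \<and> \<not> is_diag n (rs ! k) i j \<and> j \<le> n}"

definition RL :: "nat \<Rightarrow> nat \<Rightarrow> nat \<Rightarrow> nat \<Rightarrow> (letter \<times> letter) set" where
  "RL n r s m =
     {(X i, A i j k) | i j k. 1 \<le> i \<and> i < j \<and> j \<le> n \<and> 1 \<le> k \<and> k \<le> m}
   \<union> {(A i j k, X j) | i j k. 1 \<le> i \<and> i < j \<and> j \<le> n \<and> 1 \<le> k \<and> k \<le> m}
   \<union> {(B i k, X i) | i k. 1 \<le> i \<and> i \<le> n \<and> 1 \<le> k \<and> k \<le> r}
   \<union> {(X i, C i k) | i k. 1 \<le> i \<and> i \<le> n \<and> 1 \<le> k \<and> k \<le> s}"

lemma cell_cond: "(k < length rs \<and> (i, j) \<in> staircase n (rs ! k) (ss ! k) \<and> \<not> is_diag n (rs ! k) i j)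
   \<longleftrightarrow> Cell k i j \<in> book_cells n rs ss"
  by (auto simp: book_cells_def)

lemma mem_RP: "(a,b) \<in> RP n rs ss \<longleftrightarrow>
   (\<exists>k i j. a = Diag (i - rs ! k) \<and> b = Cell k i j \<and> Cell k i j \<in> book_cells n rs ss \<and> rs ! k < i)
 \<or> (\<exists>k i j. a = Cell k i j \<and> b = Diag j \<and> Cell k i j \<in> book_cells n rs ss \<and> j \<le> n)"
  unfolding RP_def cell_cond[symmetric] by blast

lemma mem_RL: "(a,b) \<in> RL n r s m \<longleftrightarrow>
   (\<exists>i j k. a = X i \<and> b = A i j k \<and> 1 \<le> i \<and> i < j \<and> j \<le> n \<and> 1 \<le> k \<and> k \<le> m)
 \<or> (\<exists>i j k. a = A i j k \<and> b = X j \<and> 1 \<le> i \<and> i < j \<and> j \<le> n \<and> 1 \<le> k \<and> k \<le> m)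
 \<or> (\<exists>i k. a = B i k \<and> b = X i \<and> 1 \<le> i \<and> i \<le> n \<and> 1 \<le> k \<and> k \<le> r)
 \<or> (\<exists>i k. a = X i \<and> b = C i k \<and> 1 \<le> i \<and> i \<le> n \<and> 1 \<le> k \<and> k \<le> s)"
  unfolding RL_def by blast

lemma RP_sub: "RP n rs ss \<subseteq> book_cells n rs ss \<times> book_cells n rs ss"
proof clarify
  fix a b assume "(a,b) \<in> RP n rs ss"
  then show "a \<in> book_cells n rs ss \<and> b \<in> book_cells n rs ss"
    unfolding mem_RP by (elim disjE exE conjE) (auto simp: mem_Diag mem_Cell)
qed

lemma RL_sub: "RL n r s m \<subseteq> alphabet n r s m \<times> alphabet n r s m"
proof clarify
  fix a b assume "(a,b) \<in> RL n r s m"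
  then show "a \<in> alphabet n r s m \<and> b \<in> alphabet n r s m"
    unfolding mem_RL by (elim disjE exE conjE) (simp_all add: mem_alph_X mem_alph_A mem_alph_B mem_alph_C)
qed

lemma SB_cond:
  "(\<forall>(a,b)\<in>RP n rs ss. f a < f b) \<longleftrightarrow>
   (\<forall>k i j. k < length rs \<and> (i, j) \<in> staircase n (rs ! k) (ss ! k) \<and> \<not> is_diag n (rs ! k) i j \<longrightarrow>
            (rs ! k < i \<longrightarrow> f (Diag (i - rs ! k)) < f (Cell k i j)) \<and>
            (j \<le> n \<longrightarrow> f (Cell k i j) < f (Diag j)))"
proof
  assume H: "\<forall>(a,b)\<in>RP n rs ss. f a < f b"
  show "\<forall>k i j. k < length rs \<and> (i, j) \<in> staircase n (rs ! k) (ss ! k) \<and> \<not> is_diag n (rs ! k) i j \<longrightarrow>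
            (rs ! k < i \<longrightarrow> f (Diag (i - rs ! k)) < f (Cell k i j)) \<and>
            (j \<le> n \<longrightarrow> f (Cell k i j) < f (Diag j))"
  proof (intro allI impI conjI)
    fix k i j assume c: "k < length rs \<and> (i, j) \<in> staircase n (rs ! k) (ss ! k) \<and> \<not> is_diag n (rs ! k) i j"
    then have cc: "Cell k i j \<in> book_cells n rs ss" using cell_cond by blast
    {
      assume "rs ! k < i"
      then have "(Diag (i - rs ! k), Cell k i j) \<in> RP n rs ss" using cc unfolding mem_RP by blast
      then show "f (Diag (i - rs ! k)) < f (Cell k i j)" using H by blast
    }
    {
      assume "j \<le> n"
      then have "(Cell k i j, Diag j) \<in> RP n rs ss" using cc unfolding mem_RP by blast
      then show "f (Cell k i j) < f (Diag j)" using H by blast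
    }
  qed
next
  assume H: "\<forall>k i j. k < length rs \<and> (i, j) \<in> staircase n (rs ! k) (ss ! k) \<and> \<not> is_diag n (rs ! k) i j \<longrightarrow>
            (rs ! k < i \<longrightarrow> f (Diag (i - rs ! k)) < f (Cell k i j)) \<and>
            (j \<le> n \<longrightarrow> f (Cell k i j) < f (Diag j))"
  show "\<forall>(a,b)\<in>RP n rs ss. f a < f b"
  proof clarify
    fix a b assume "(a,b) \<in> RP n rs ss"
    then show "f a < f b"
      unfolding mem_RP cell_cond[symmetric] using H by blast
  qed
qed

lemma SB_eq:
  "SB_minus n rs ss = {f. f \<in> extensional (book_cells n rs ss) \<and>
     bij_betw f (book_cells n rs ss) {1 .. (sum_list rs + sum_list ss + 1) * n + length rs * (n choose 2)}
     \<and> (\<forall>(a,b)\<in>RP n rs ss. f a < f b)}"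
  unfolding SB_minus_def SB_cond ..

lemma SP_cond:
  "(\<forall>(a,b)\<in>RL n r s m. precedes w a b) \<longleftrightarrow>
     ((\<forall>i j k. 1 \<le> i \<and> i < j \<and> j \<le> n \<and> 1 \<le> k \<and> k \<le> m \<longrightarrow>
        precedes w (X i) (A i j k) \<and> precedes w (A i j k) (X j)) \<and>
     (\<forall>i k. 1 \<le> i \<and> i \<le> n \<and> 1 \<le> k \<and> k \<le> r \<longrightarrow> precedes w (B i k) (X i)) \<and>
     (\<forall>i k. 1 \<le> i \<and> i \<le> n \<and> 1 \<le> k \<and> k \<le> s \<longrightarrow> precedes w (X i) (C i k)))"
proof
  assume H: "\<forall>(a,b)\<in>RL n r s m. precedes w a b"
  have h: "precedes w a b" if "(a,b) \<in> RL n r s m" for a b using H that by blast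
  show "((\<forall>i j k. 1 \<le> i \<and> i < j \<and> j \<le> n \<and> 1 \<le> k \<and> k \<le> m \<longrightarrow>
        precedes w (X i) (A i j k) \<and> precedes w (A i j k) (X j)) \<and>
     (\<forall>i k. 1 \<le> i \<and> i \<le> n \<and> 1 \<le> k \<and> k \<le> r \<longrightarrow> precedes w (B i k) (X i)) \<and>
     (\<forall>i k. 1 \<le> i \<and> i \<le> n \<and> 1 \<le> k \<and> k \<le> s \<longrightarrow> precedes w (X i) (C i k)))"
    by (intro conjI allI impI; rule h; simp add: mem_RL)
next
  assume H: "((\<forall>i j k. 1 \<le> i \<and> i < j \<and> j \<le> n \<and> 1 \<le> k \<and> k \<le> m \<longrightarrow>
        precedes w (X i) (A i j k) \<and> precedes w (A i j k) (X j)) \<and>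
     (\<forall>i k. 1 \<le> i \<and> i \<le> n \<and> 1 \<le> k \<and> k \<le> r \<longrightarrow> precedes w (B i k) (X i)) \<and>
     (\<forall>i k. 1 \<le> i \<and> i \<le> n \<and> 1 \<le> k \<and> k \<le> s \<longrightarrow> precedes w (X i) (C i k)))"
  show "\<forall>(a,b)\<in>RL n r s m. precedes w a b"
  proof clarify
    fix a b assume "(a,b) \<in> RL n r s m"
    then show "precedes w a b" unfolding mem_RL
      by (elim disjE exE conjE; hypsubst; use H in blast)
  qed
qed

lemma Xorder:
  assumes m: "0 < m" and d: "distinct w" and H: "\<forall>i j k. 1 \<le> i \<and> i < j \<and> j \<le> n \<and> 1 \<le> k \<and> k \<le> m \<longrightarrow>
        precedes w (X i) (A i j k) \<and> precedes w (A i j k) (X j)"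
  shows "\<forall>i j. 1 \<le> i \<and> i < j \<and> j \<le> n \<longrightarrow> precedes w (X i) (X j)"
proof (intro allI impI)
  fix i j assume "1 \<le> i \<and> i < j \<and> j \<le> n"
  then have "precedes w (X i) (A i j 1) \<and> precedes w (A i j 1) (X j)" using H m by simp
  then show "precedes w (X i) (X j)" using precedes_trans[OF d] by blast
qed

lemma SP_eq:
  assumes m: "0 < m"
  shows "SP n r s m = {w. distinct w \<and> set w = alphabet n r s m \<and> (\<forall>(a,b)\<in>RL n r s m. precedes w a b)}"
  unfolding SP_def SP_cond
  apply (rule Collect_cong)
  apply (rule iffI)
   apply (elim conjE, intro conjI, assumption+)
  apply (elim conjE, intro conjI)
       apply (assumption | rule Xorder[OF m])+
  done

lemma RL_image:
  assumes len: "length ss = length rs"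
  shows "RL n (sum_list rs) (sum_list ss) (length rs)
       = (\<lambda>(a,b). (phi n rs ss a, phi n rs ss b)) ` RP n rs ss"
proof
  show "(\<lambda>(a,b). (phi n rs ss a, phi n rs ss b)) ` RP n rs ss \<subseteq> RL n (sum_list rs) (sum_list ss) (length rs)"
  proof clarify
    fix a b assume ab: "(a, b) \<in> RP n rs ss"
    show "(phi n rs ss a, phi n rs ss b) \<in> RL n (sum_list rs) (sum_list ss) (length rs)"
      using ab unfolding RP_def
    proof (elim UnE CollectE exE conjE)
      fix k i j
      assume e: "(a, b) = (Diag (i - rs ! k), Cell k i j)" and k: "k < length rs"
        and st: "(i, j) \<in> staircase n (rs ! k) (ss ! k)" and nd: "\<not> is_diag n (rs ! k) i j"
        and lt: "rs ! k < i"
      have cc: "Cell k i j \<in> book_cells n rs ss" using cell_cond k st nd by blast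
      note c2 = cc[unfolded mem_Cell]
      show "(phi n rs ss a, phi n rs ss b) \<in> RL n (sum_list rs) (sum_list ss) (length rs)"
      proof (cases "j \<le> n")
        case True
        then show ?thesis using e c2 lt unfolding RL_def by (auto simp: phi_def)
      next
        case False
        have "off k ss + ss ! k \<le> sum_list ss" using k len by (intro off_le) simp
        then show ?thesis using False e c2 lt unfolding RL_def by (auto simp: phi_def)
      qed
    next
      fix k i j
      assume e: "(a, b) = (Cell k i j, Diag j)" and k: "k < length rs"
        and st: "(i, j) \<in> staircase n (rs ! k) (ss ! k)" and nd: "\<not> is_diag n (rs ! k) i j"
        and jn: "j \<le> n"
      have cc: "Cell k i j \<in> book_cells n rs ss" using cell_cond k st nd by blast
      note c2 = cc[unfolded mem_Cell]
      show "(phi n rs ss a, phi n rs ss b) \<in> RL n (sum_list rs) (sum_list ss) (length rs)"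
      proof (cases "i \<le> rs ! k")
        case True
        have "off k rs + rs ! k \<le> sum_list rs" using k by (intro off_le) simp
        then show ?thesis using True e c2 jn unfolding RL_def by (auto simp: phi_def)
      next
        case False
        then show ?thesis using e c2 jn unfolding RL_def by (auto simp: phi_def)
      qed
    qed
  qed
next
  show "RL n (sum_list rs) (sum_list ss) (length rs) \<subseteq> (\<lambda>(a,b). (phi n rs ss a, phi n rs ss b)) ` RP n rs ss"
  proof
    fix x assume x: "x \<in> RL n (sum_list rs) (sum_list ss) (length rs)"
    show "x \<in> (\<lambda>(a,b). (phi n rs ss a, phi n rs ss b)) ` RP n rs ss"
      using x unfolding RL_def
    proof (elim UnE CollectE exE conjE)
      fix i j k assume e: "x = (X i, A i j k)" "1 \<le> i" "i < j" "j \<le> n" "1 \<le> k" "k \<le> length rs"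
      have "(Diag i, Cell (k - 1) (i + rs ! (k - 1)) j) \<in> RP n rs ss"
        unfolding RP_def using e
        by (intro UnI1 CollectI exI[of _ "k - 1"] exI[of _ "i + rs ! (k - 1)"] exI[of _ j])
           (auto simp: staircase_def is_diag_def)
      then show ?thesis using e by (intro image_eqI) (auto simp: phi_def)
    next
      fix i j k assume e: "x = (A i j k, X j)" "1 \<le> i" "i < j" "j \<le> n" "1 \<le> k" "k \<le> length rs"
      have "(Cell (k - 1) (i + rs ! (k - 1)) j, Diag j) \<in> RP n rs ss"
        unfolding RP_def using e
        by (intro UnI2 CollectI exI[of _ "k - 1"] exI[of _ "i + rs ! (k - 1)"] exI[of _ j])
           (auto simp: staircase_def is_diag_def)
      then show ?thesis using e by (intro image_eqI) (auto simp: phi_def)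
    next
      fix i k assume e: "x = (B i k, X i)" "1 \<le> i" "i \<le> n" "1 \<le> k" "k \<le> sum_list rs"
      then obtain kk ii where d: "kk < length rs" "1 \<le> ii" "ii \<le> rs ! kk" "k = off kk rs + ii"
        using off_decomp by blast
      have "(Cell kk ii i, Diag i) \<in> RP n rs ss"
        unfolding RP_def using e d
        by (intro UnI2 CollectI exI[of _ kk] exI[of _ ii] exI[of _ i])
           (auto simp: staircase_def is_diag_def)
      then show ?thesis using e d by (intro image_eqI) (auto simp: phi_def)
    next
      fix i k assume e: "x = (X i, C i k)" "1 \<le> i" "i \<le> n" "1 \<le> k" "k \<le> sum_list ss"
      then obtain kk jj where d: "kk < length ss" "1 \<le> jj" "jj \<le> ss ! kk" "k = off kk ss + jj"
        using off_decomp by blast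
      have "(Diag i, Cell kk (i + rs ! kk) (n + jj)) \<in> RP n rs ss"
        unfolding RP_def using e d len
        by (intro UnI1 CollectI exI[of _ kk] exI[of _ "i + rs ! kk"] exI[of _ "n + jj"])
           (auto simp: staircase_def is_diag_def)
      then show ?thesis using e d by (intro image_eqI) (auto simp: phi_def)
    qed
  qed
qed


theorem proposition4p2:
  fixes n m :: nat and rs ss :: "nat list"
  assumes "0 < n" and "0 < m" and "length rs = m" and "length ss = m"
  shows "card (SB_minus n rs ss) = card (SP n (sum_list rs) (sum_list ss) m)"
proof -
  have len: "length ss = length rs" using assms by simp
  let ?N = "(sum_list rs + sum_list ss + 1) * n + length rs * (n choose 2)"
  have "card (SB_minus n rs ss) = card {f. f \<in> extensional (book_cells n rs ss) \<and>
     bij_betw f (book_cells n rs ss) {1 .. ?N} \<and> (\<forall>(a,b)\<in>RP n rs ss. f a < f b)}"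
    by (simp only: SB_eq)
  also have "\<dots> = card {g. g \<in> extensional (alphabet n (sum_list rs) (sum_list ss) (length rs)) \<and>
     bij_betw g (alphabet n (sum_list rs) (sum_list ss) (length rs)) {1 .. ?N} \<and>
     (\<forall>(a,b)\<in>RL n (sum_list rs) (sum_list ss) (length rs). g a < g b)}"
    by (rule card_linext_transport[OF phi_bij[OF len] RP_sub RL_image[OF len]])
  also have "\<dots> = card {w. distinct w \<and> set w = alphabet n (sum_list rs) (sum_list ss) (length rs) \<and>
     (\<forall>(a,b)\<in>RL n (sum_list rs) (sum_list ss) (length rs). precedes w a b)}"
    by (rule card_linext_list[OF finite_alphabet card_alphabet RL_sub])
  also have "\<dots> = card (SP n (sum_list rs) (sum_list ss) (length rs))"
    using SP_eq[of "length rs"] assms by simp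
  finally show ?thesis using assms by simp
qed

end
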